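(* Fix an integer $k\ge1$, let $\Delta_k:=\log(1/2)/\log(1-2^{-k})$, fix $\Delta>0$, and for $n\ge k$ let $m=\lfloor\Delta n\rfloor$. As $n\to\infty$: (i) if $\Delta>\Delta_k$ and $\psi_{\mathsf{FLAT}}(V):=\mathbf{1}\{Z(V)>0\}$, then $$\mathbf{P}_{\text{unif}}(\psi_{\mathsf{FLAT}}=1)\vee\mathbf{P}_{\text{planted}}(\psi_{\mathsf{FLAT}}=0)\to0;$$ (ii) if $\Delta<\Delta_k$, then $$\inf_{\psi}\ \mathbf{P}_{\text{unif}}(\psi=1)\vee\mathbf{P}_{\text{planted}}(\psi=0)\to\tfrac12,$$ where the infimum is over all tests $\psi$, i.e. (possibly randomized) $\{0,1\}$-valued functions of $V$.
   Context: A $k$-flat of $\mathbb{F}_2^n$ is an affine subspace of dimension $n-k$; equivalently a set $\{x\in\mathbb{F}_2^n : \ell_i(x)=\varepsilon_i \ \forall i\in[k]\}$ where $\ell_1,\dots,\ell_k$ are linearly independent linear forms on $\mathbb{F}_2^n$ and $\varepsilon_1,\dots,\varepsilon_k\in\mathbb{F}_2$. Let $q_0$ be the uniform distribution on the set of all $k$-flats, and for $x\in\mathbb{F}_2^n$ let $q_x$ be the uniform distribution on the set of $k$-flats not containing $x$. Define $\mathbf{P}_{\text{unif}}:=q_0^{\otimes m}$, $\mathbf{P}_{x}:=q_x^{\otimes m}$ and $\mathbf{P}_{\text{planted}}:=2^{-n}\sum_{x\in\mathbb{F}_2^n}\mathbf{P}_x$. For $V=(V_1,\dots,V_m)$, $\mathcal{S}(V)=\mathbb{F}_2^n\setminus\bigcup_j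 V_j$ and $Z(V)=|\mathcal{S}(V)|$. $a\vee b=\max(a,b)$. *)

theory Defs
  imports "HOL-Probability.Probability"
begin

text \<open>Vectors of F_2^n are boolean lists of length n; addition is componentwise xor.\<close>

definition vecs :: "nat \<Rightarrow> bool list set" where
  "vecs n = {xs. length xs = n}"

definition vadd :: "bool list \<Rightarrow> bool list \<Rightarrow> bool list" where
  "vadd xs ys = map2 (\<noteq>) xs ys"

text \<open>Affine subspace of F_2^n: nonempty and closed under x+y+z (characteristic 2).\<close>
definition affine_sub :: "nat \<Rightarrow> bool list set \<Rightarrow> bool" where
  "affine_sub n A \<longleftrightarrow> A \<subseteq> vecs n \<and> A \<noteq> {} \<and>
     (\<forall>x\<in>A. \<forall>y\<in>A. \<forall>z\<in>A. vadd (vadd x y) z \<in> A)"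

text \<open>k-flats: affine subspaces of dimension n-k, i.e. of cardinality 2^(n-k).\<close>
definition flats :: "nat \<Rightarrow> nat \<Rightarrow> bool list set set" where
  "flats n k = {A. affine_sub n A \<and> card A = 2 ^ (n - k)}"

definition q0 :: "nat \<Rightarrow> nat \<Rightarrow> bool list set pmf" where
  "q0 n k = pmf_of_set (flats n k)"

definition qx :: "nat \<Rightarrow> nat \<Rightarrow> bool list \<Rightarrow> bool list set pmf" where
  "qx n k x = pmf_of_set {A \<in> flats n k. x \<notin> A}"

text \<open>m-fold products: V = (V_0, ..., V_{m-1}) encoded as a function on {..<m}.\<close>
definition P_unif :: "nat \<Rightarrow> nat \<Rightarrow> nat \<Rightarrow> (nat \<Rightarrow> bool list set) pmf" where
  "P_unif n k m = Pi_pmf {..<m} {} (\<lambda>_. q0 n k)"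

definition P_x :: "nat \<Rightarrow> nat \<Rightarrow> nat \<Rightarrow> bool list \<Rightarrow> (nat \<Rightarrow> bool list set) pmf" where
  "P_x n k m x = Pi_pmf {..<m} {} (\<lambda>_. qx n k x)"

definition P_planted :: "nat \<Rightarrow> nat \<Rightarrow> nat \<Rightarrow> (nat \<Rightarrow> bool list set) pmf" where
  "P_planted n k m = bind_pmf (pmf_of_set (vecs n)) (\<lambda>x. P_x n k m x)"

definition Zc :: "nat \<Rightarrow> nat \<Rightarrow> (nat \<Rightarrow> bool list set) \<Rightarrow> nat" where
  "Zc n m V = card (vecs n - (\<Union>j<m. V j))"

definition Delta_k :: "nat \<Rightarrow> real" where
  "Delta_k k = ln (1/2) / ln (1 - 2 powr (- real k))"

definition mm :: "real \<Rightarrow> nat \<Rightarrow> nat" where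
  "mm \<Delta> n = nat \<lfloor>\<Delta> * real n\<rfloor>"

text \<open>A (possibly randomized) test maps V to a distribution on {0,1} = bool (True = 1).
  Error of a test: max of P_unif(psi = 1) and P_planted(psi = 0).\<close>
definition test_err :: "nat \<Rightarrow> nat \<Rightarrow> nat \<Rightarrow> ((nat \<Rightarrow> bool list set) \<Rightarrow> bool pmf) \<Rightarrow> real" where
  "test_err n k m \<psi> =
     max (measure_pmf.prob (bind_pmf (P_unif n k m) \<psi>) {True})
         (measure_pmf.prob (bind_pmf (P_planted n k m) \<psi>) {False})"

end

theory Submission
  imports Defs
begin


lemma length_vadd[simp]: "length (vadd x y) = min (length x) (length y)"
  by (simp add: vadd_def)

lemma nth_vadd[simp]: "i < length x \<Longrightarrow> i < length y \<Longrightarrow> vadd x y ! i = (x!i \<noteq> y!i)"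
  by (simp add: vadd_def)

lemma vecs_iff[simp]: "x \<in> vecs n \<longleftrightarrow> length x = n"
  by (simp add: vecs_def)

lemma finite_vecs[simp]: "finite (vecs n)"
proof -
  have "vecs n = {xs. set xs \<subseteq> UNIV \<and> length xs = n}" by (auto simp: vecs_def)
  thus ?thesis using finite_lists_length_eq[of "UNIV::bool set" n] by simp
qed

lemma card_vecs: "card (vecs n) = 2 ^ n"
proof -
  have "vecs n = {xs. set xs \<subseteq> (UNIV::bool set) \<and> length xs = n}" by (auto simp: vecs_def)
  thus ?thesis using card_lists_length_eq[of "UNIV::bool set" n] by simp
qed

lemma vecs_eqI: "length x = n \<Longrightarrow> length y = n \<Longrightarrow> (\<And>i. i < n \<Longrightarrow> x!i = y!i) \<Longrightarrow> x = y"
  by (metis nth_equalityI)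

lemma finite_flats[simp]: "finite (flats n k)"
proof -
  have "flats n k \<subseteq> Pow (vecs n)" by (auto simp: flats_def affine_sub_def)
  thus ?thesis by (meson finite_Pow_iff finite_subset finite_vecs)
qed

lemma flats_sub: "A \<in> flats n k \<Longrightarrow> A \<subseteq> vecs n"
  by (auto simp: flats_def affine_sub_def)

lemma flats_card: "A \<in> flats n k \<Longrightarrow> card A = 2^(n-k)"
  by (auto simp: flats_def)

definition goodmap :: "nat \<Rightarrow> (bool list \<Rightarrow> bool list) \<Rightarrow> bool" where
  "goodmap n h \<longleftrightarrow> (\<forall>x\<in>vecs n. h x \<in> vecs n \<and> h (h x) = x) \<and>
     (\<forall>x\<in>vecs n. \<forall>y\<in>vecs n. \<forall>z\<in>vecs n. h (vadd (vadd x y) z) = vadd (vadd (h x) (h y)) (h z))"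

lemma goodmap_flats:
  assumes g: "goodmap n h" and A: "A \<in> flats n k"
  shows "h ` A \<in> flats n k"
proof -
  have sub: "A \<subseteq> vecs n" using A flats_sub by blast
  have inj: "inj_on h A"
    by (rule inj_onI) (metis g goodmap_def sub subsetD)
  have "affine_sub n (h ` A)"
    unfolding affine_sub_def
  proof (intro conjI ballI)
    show "h ` A \<subseteq> vecs n" using g sub by (auto simp: goodmap_def)
    show "h ` A \<noteq> {}" using A by (auto simp: flats_def affine_sub_def)
    fix a b c assume "a \<in> h ` A" "b \<in> h ` A" "c \<in> h ` A"
    then obtain x y z where xyz: "x\<in>A" "y\<in>A" "z\<in>A" "a = h x" "b = h y" "c = h z" by blast
    have "vadd (vadd x y) z \<in> A" using A xyz by (auto simp: flats_def affine_sub_def)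
    moreover have "h (vadd (vadd x y) z) = vadd (vadd a b) c"
    proof -
      have "x \<in> vecs n" "y \<in> vecs n" "z \<in> vecs n" using xyz sub by blast+
      thus ?thesis using g xyz unfolding goodmap_def by blast
    qed
    ultimately show "vadd (vadd a b) c \<in> h ` A" by (metis imageI)
  qed
  moreover have "card (h ` A) = 2^(n-k)" using card_image[OF inj] A by (simp add: flats_card)
  ultimately show ?thesis by (simp add: flats_def)
qed

lemma goodmap_mem:
  assumes g: "goodmap n h" and A: "A \<in> flats n k" and x: "x \<in> vecs n"
  shows "x \<in> h ` A \<longleftrightarrow> h x \<in> A"
proof -
  have sub: "A \<subseteq> vecs n" using A flats_sub by blast
  show ?thesis using g sub x unfolding goodmap_def by (smt (verit, best) image_iff subsetD)
qed

lemma goodmap_card: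
  assumes g: "goodmap n h"
  shows "card {A \<in> flats n k. P A} = card {A \<in> flats n k. P (h ` A)}"
proof -
  have ii: "h ` (h ` A) = A" if "A \<in> flats n k" for A
  proof -
    have "A \<subseteq> vecs n" using that flats_sub by blast
    hence "\<forall>x\<in>A. h (h x) = x" using g by (auto simp: goodmap_def)
    thus ?thesis by (simp add: image_image)
  qed
  have "bij_betw ((`) h) {A \<in> flats n k. P (h ` A)} {A \<in> flats n k. P A}"
    by (rule bij_betw_byWitness[where f'="(`) h"]) (auto simp: ii goodmap_flats[OF g])
  thus ?thesis by (simp add: bij_betw_same_card)
qed

lemma goodmap_transl: "v \<in> vecs n \<Longrightarrow> goodmap n (vadd v)"
  unfolding goodmap_def
  by (auto intro!: vecs_eqI)

definition tv :: "nat \<Rightarrow> nat \<Rightarrow> bool \<Rightarrow> bool list \<Rightarrow> bool list \<Rightarrow> bool list" where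
  "tv i j b c x = (if (x!i \<noteq> (b \<and> x!j)) then vadd x c else x)"

lemma tv_len: "length x = n \<Longrightarrow> length (tv i j b c x) = min n (length c) \<or> length (tv i j b c x) = n"
  by (simp add: tv_def)

lemma goodmap_tv:
  assumes ij: "i < n" "j < n" and c: "c \<in> vecs n" and fc: "\<not> (c!i \<noteq> (b \<and> c!j))"
  shows "goodmap n (tv i j b c)"
proof -
  define f where "f x = (x!i \<noteq> (b \<and> x!j))" for x :: "bool list"
  have tvf: "tv i j b c x = (if f x then vadd x c else x)" for x by (simp add: tv_def f_def)
  have len: "length (tv i j b c x) = n" if "length x = n" for x using that c by (simp add: tvf)
  have nth: "tv i j b c x ! l = (x!l \<noteq> (f x \<and> c!l))" if "length x = n" "l < n" for x l
    using that c by (simp add: tvf)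
  have fadd: "f (vadd x y) = (f x \<noteq> f y)" if "length x = n" "length y = n" for x y
    using that ij by (auto simp: f_def)
  have ftv: "f (tv i j b c x) = f x" if "length x = n" for x
    using that ij fc c by (auto simp: f_def nth)
  show ?thesis unfolding goodmap_def
  proof (intro conjI ballI)
    fix x assume x: "x \<in> vecs n"
    show "tv i j b c x \<in> vecs n" using x len by simp
    show "tv i j b c (tv i j b c x) = x"
      apply (rule vecs_eqI[of _ n])
      using x len nth ftv by auto
  next
    fix x y z assume xyz: "x \<in> vecs n" "y \<in> vecs n" "z \<in> vecs n"
    have L: "length x = n" "length y = n" "length z = n" using xyz by auto
    have fs: "f (vadd (vadd x y) z) = ((f x \<noteq> f y) \<noteq> f z)" using L by (simp add: fadd)
    show "tv i j b c (vadd (vadd x y) z) = vadd (vadd (tv i j b c x) (tv i j b c y)) (tv i j b c z)"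
    proof (rule vecs_eqI[of _ n])
      fix l assume l: "l < n"
      have "tv i j b c (vadd (vadd x y) z) ! l = (vadd (vadd x y) z ! l \<noteq> (f (vadd (vadd x y) z) \<and> c!l))"
        using L l by (intro nth) auto
      also have "\<dots> = (((x!l \<noteq> y!l) \<noteq> z!l) \<noteq> (((f x \<noteq> f y) \<noteq> f z) \<and> c!l))" using L l fs by simp
      also have "\<dots> = vadd (vadd (tv i j b c x) (tv i j b c y)) (tv i j b c z) ! l"
        using L l len nth by auto
      finally show "tv i j b c (vadd (vadd x y) z) ! l = vadd (vadd (tv i j b c x) (tv i j b c y)) (tv i j b c z) ! l" .
    qed (use L len in auto)
  qed
qed

abbreviation z0 :: "nat \<Rightarrow> bool list" where "z0 n \<equiv> replicate n False"

lemma vadd_self: "x \<in> vecs n \<Longrightarrow> vadd x x = z0 n"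
  by (auto intro!: vecs_eqI)

lemma cnt1_transl:
  assumes x: "x \<in> vecs n"
  shows "card {A \<in> flats n k. x \<in> A} = card {A \<in> flats n k. z0 n \<in> A}"
proof -
  have g: "goodmap n (vadd x)" using goodmap_transl x by blast
  have "card {A \<in> flats n k. x \<in> A} = card {A \<in> flats n k. x \<in> vadd x ` A}"
    by (rule goodmap_card[OF g])
  also have "{A \<in> flats n k. x \<in> vadd x ` A} = {A \<in> flats n k. z0 n \<in> A}"
  proof (rule Collect_cong)
    fix A show "(A \<in> flats n k \<and> x \<in> vadd x ` A) = (A \<in> flats n k \<and> z0 n \<in> A)"
      using goodmap_mem[OF g _ x, of A k] vadd_self[OF x] by metis
  qed
  finally show ?thesis .
qed

lemma cnt2_transl:
  assumes x: "x \<in> vecs n" and y: "y \<in> vecs n"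
  shows "card {A \<in> flats n k. x \<in> A \<and> y \<in> A} = card {A \<in> flats n k. z0 n \<in> A \<and> vadd x y \<in> A}"
proof -
  have g: "goodmap n (vadd x)" using goodmap_transl x by blast
  have "card {A \<in> flats n k. x \<in> A \<and> y \<in> A} = card {A \<in> flats n k. x \<in> vadd x ` A \<and> y \<in> vadd x ` A}"
    by (rule goodmap_card[OF g])
  also have "{A \<in> flats n k. x \<in> vadd x ` A \<and> y \<in> vadd x ` A} = {A \<in> flats n k. z0 n \<in> A \<and> vadd x y \<in> A}"
  proof (rule Collect_cong)
    fix A show "(A \<in> flats n k \<and> x \<in> vadd x ` A \<and> y \<in> vadd x ` A) = (A \<in> flats n k \<and> z0 n \<in> A \<and> vadd x y \<in> A)"
      using goodmap_mem[OF g _ x, of A k] goodmap_mem[OF g _ y, of A k] vadd_self[OF x] by metis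
  qed
  finally show ?thesis .
qed

lemma nonzero_ex: "u \<in> vecs n \<Longrightarrow> u \<noteq> z0 n \<Longrightarrow> \<exists>i<n. u!i"
  by (metis in_set_conv_nth in_set_replicate length_replicate nth_equalityI vecs_iff)

lemma cnt2_nonzero:
  assumes u: "u \<in> vecs n" and w: "w \<in> vecs n" and u0: "u \<noteq> z0 n" and w0: "w \<noteq> z0 n"
  shows "card {A \<in> flats n k. z0 n \<in> A \<and> u \<in> A} = card {A \<in> flats n k. z0 n \<in> A \<and> w \<in> A}"
proof -
  obtain i j b where ijb: "i < n" "j < n" "u!i \<noteq> (b \<and> u!j)" "w!i \<noteq> (b \<and> w!j)"
  proof (cases "\<exists>i<n. u!i \<and> w!i")
    case True
    then obtain i where "i<n" "u!i" "w!i" by blast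
    thus ?thesis using that[of i i False] by auto
  next
    case False
    obtain i where i: "i<n" "u!i" using nonzero_ex[OF u u0] by blast
    obtain j where j: "j<n" "w!j" using nonzero_ex[OF w w0] by blast
    have "\<not> w!i" "\<not> u!j" using False i j by auto
    thus ?thesis using that[of i j True] i j by auto
  qed
  define c where "c = vadd u w"
  have c: "c \<in> vecs n" using u w by (simp add: c_def)
  have fc: "\<not> (c!i \<noteq> (b \<and> c!j))" using ijb u w by (auto simp: c_def)
  have g: "goodmap n (tv i j b c)" by (rule goodmap_tv[OF ijb(1,2) c fc])
  have h0: "tv i j b c (z0 n) = z0 n" using ijb by (simp add: tv_def)
  have hu: "tv i j b c u = w" using ijb u w by (auto simp: tv_def c_def intro!: vecs_eqI)
  have z: "z0 n \<in> vecs n" by simp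
  have "card {A \<in> flats n k. z0 n \<in> A \<and> u \<in> A} = card {A \<in> flats n k. z0 n \<in> tv i j b c ` A \<and> u \<in> tv i j b c ` A}"
    by (rule goodmap_card[OF g])
  also have "{A \<in> flats n k. z0 n \<in> tv i j b c ` A \<and> u \<in> tv i j b c ` A} = {A \<in> flats n k. z0 n \<in> A \<and> w \<in> A}"
  proof (rule Collect_cong)
    fix A show "(A \<in> flats n k \<and> z0 n \<in> tv i j b c ` A \<and> u \<in> tv i j b c ` A) = (A \<in> flats n k \<and> z0 n \<in> A \<and> w \<in> A)"
      using goodmap_mem[OF g _ z, of A k] goodmap_mem[OF g _ u, of A k] h0 hu by metis
  qed
  finally show ?thesis .
qed

lemma double_count:
  assumes "finite S" "finite D"
  shows "(\<Sum>d\<in>D. card {A\<in>S. R A d}) = (\<Sum>A\<in>S. card {d\<in>D. R A d})"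
proof -
  have "(\<Sum>d\<in>D. card {A\<in>S. R A d}) = (\<Sum>d\<in>D. \<Sum>A\<in>S. if R A d then 1 else 0)"
    using assms by (simp add: sum.inter_filter[symmetric])
  also have "\<dots> = (\<Sum>A\<in>S. \<Sum>d\<in>D. if R A d then 1 else 0)" by (rule sum.swap)
  also have "\<dots> = (\<Sum>A\<in>S. card {d\<in>D. R A d})"
    using assms by (simp add: sum.inter_filter[symmetric])
  finally show ?thesis .
qed

lemma cnt1_formula:
  "2^n * card {A \<in> flats n k. z0 n \<in> A} = card (flats n k) * 2^(n-k)"
proof -
  have "(\<Sum>x\<in>vecs n. card {A \<in> flats n k. x \<in> A}) = (\<Sum>A\<in>flats n k. card {x\<in>vecs n. x \<in> A})"
    by (rule double_count) auto
  also have "\<dots> = (\<Sum>A\<in>flats n k. 2^(n-k))"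
  proof (rule sum.cong)
    fix A assume A: "A \<in> flats n k"
    have "{x\<in>vecs n. x \<in> A} = A" using flats_sub[OF A] by auto
    thus "card {x\<in>vecs n. x \<in> A} = 2^(n-k)" using flats_card[OF A] by simp
  qed simp
  also have "(\<Sum>x\<in>vecs n. card {A \<in> flats n k. x \<in> A}) = (\<Sum>x\<in>vecs n. card {A \<in> flats n k. z0 n \<in> A})"
    by (rule sum.cong) (auto intro: cnt1_transl)
  finally show ?thesis by (simp add: card_vecs)
qed

lemma cnt2_formula:
  assumes e: "e \<in> vecs n" "e \<noteq> z0 n"
  shows "(2^n - 1) * card {A \<in> flats n k. z0 n \<in> A \<and> e \<in> A} = card {A \<in> flats n k. z0 n \<in> A} * (2^(n-k) - 1)"
proof -
  have "(\<Sum>d\<in>vecs n - {z0 n}. card {A \<in> flats n k. z0 n \<in> A \<and> d \<in> A}) = (\<Sum>A\<in>flats n k. card {d\<in>vecs n - {z0 n}. z0 n \<in> A \<and> d \<in> A})"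
    by (rule double_count) auto
  also have "\<dots> = (\<Sum>A\<in>flats n k. if z0 n \<in> A then 2^(n-k) - 1 else 0)"
  proof (rule sum.cong)
    fix A assume A: "A \<in> flats n k"
    show "card {d\<in>vecs n - {z0 n}. z0 n \<in> A \<and> d \<in> A} = (if z0 n \<in> A then 2^(n-k) - 1 else 0)"
    proof (cases "z0 n \<in> A")
      case True
      have "{d\<in>vecs n - {z0 n}. z0 n \<in> A \<and> d \<in> A} = A - {z0 n}" using flats_sub[OF A] True by auto
      thus ?thesis using True flats_card[OF A] finite_subset[OF flats_sub[OF A]] by simp
    qed simp
  qed simp
  also have "\<dots> = card {A \<in> flats n k. z0 n \<in> A} * (2^(n-k) - 1)"
    by (simp add: sum.inter_filter[symmetric])
  also have "(\<Sum>d\<in>vecs n - {z0 n}. card {A \<in> flats n k. z0 n \<in> A \<and> d \<in> A}) = (\<Sum>d\<in>vecs n - {z0 n}. card {A \<in> flats n k. z0 n \<in> A \<and> e \<in> A})"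
    by (rule sum.cong) (use e in \<open>auto intro: cnt2_nonzero\<close>)
  also have "\<dots> = (2^n - 1) * card {A \<in> flats n k. z0 n \<in> A \<and> e \<in> A}"
    by (simp add: card_vecs)
  finally show ?thesis by simp
qed




lemma flats_nonempty:
  assumes "k \<le> n" shows "flats n k \<noteq> {}"
proof -
  define A0 where "A0 = {xs \<in> vecs n. \<forall>i<k. \<not> xs!i}"
  have img: "A0 = (\<lambda>ys. replicate k False @ ys) ` vecs (n-k)"
  proof
    show "A0 \<subseteq> (\<lambda>ys. replicate k False @ ys) ` vecs (n-k)"
    proof
      fix xs assume xs: "xs \<in> A0"
      have "take k xs = replicate k False"
        using xs assms by (auto simp: A0_def intro!: nth_equalityI)
      hence "xs = replicate k False @ drop k xs" by (metis append_take_drop_id)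
      moreover have "drop k xs \<in> vecs (n-k)" using xs by (auto simp: A0_def)
      ultimately show "xs \<in> (\<lambda>ys. replicate k False @ ys) ` vecs (n-k)" by blast
    qed
    show "(\<lambda>ys. replicate k False @ ys) ` vecs (n-k) \<subseteq> A0"
      using assms by (auto simp: A0_def nth_append)
  qed
  have "card A0 = 2^(n-k)"
    unfolding img by (subst card_image) (auto simp: inj_on_def card_vecs)
  moreover have "affine_sub n A0"
    unfolding affine_sub_def
  proof (intro conjI ballI)
    show "A0 \<subseteq> vecs n" by (auto simp: A0_def)
    have "replicate (n-k) False \<in> vecs (n-k)" by simp
    thus "A0 \<noteq> {}" unfolding img by blast
    fix x y z assume "x \<in> A0" "y \<in> A0" "z \<in> A0"
    thus "vadd (vadd x y) z \<in> A0" using assms by (auto simp: A0_def)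
  qed
  ultimately show ?thesis by (auto simp: flats_def)
qed

lemma card_filter_real:
  "finite S \<Longrightarrow> real (card {a\<in>S. P a}) = (\<Sum>a\<in>S. of_bool (P a))"
  by (simp add: Int_def)

locale flatctx =
  fixes n k :: nat
  assumes k1: "1 \<le> k" and kn: "k \<le> n"
begin

abbreviation F where "F \<equiv> real (card (flats n k))"
abbreviation p :: real where "p \<equiv> 1 / 2^k"

lemma F_pos: "F > 0"
  using flats_nonempty[OF kn] by (simp add: card_gt_0_iff)

lemma p_bounds: "0 < p" "p \<le> 1/2"
proof -
  have "(2::real)^1 \<le> 2^k" using k1 by (intro power_increasing) auto
  thus "p \<le> 1/2" by (simp add: field_simps)
qed simp

lemma c1: "x \<in> vecs n \<Longrightarrow> real (card {A \<in> flats n k. x \<in> A}) = F * p"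
proof -
  assume x: "x \<in> vecs n"
  have e: "(2::real)^n = 2^k * 2^(n-k)" using kn by (simp add: power_add[symmetric])
  have "real (2^n * card {A \<in> flats n k. z0 n \<in> A}) = real (card (flats n k) * 2^(n-k))"
    using cnt1_formula by metis
  hence "2^k * 2^(n-k) * real (card {A \<in> flats n k. z0 n \<in> A}) = F * 2^(n-k)"
    by (simp add: e)
  hence "real (card {A \<in> flats n k. z0 n \<in> A}) = F * p"
    by (simp add: field_simps)
  thus ?thesis using cnt1_transl[OF x] by simp
qed

lemma c2:
  assumes x: "x \<in> vecs n" and y: "y \<in> vecs n" and xy: "x \<noteq> y"
  shows "real (card {A \<in> flats n k. x \<in> A \<and> y \<in> A}) \<le> F * p^2"
proof -
  define e where "e = vadd x y"
  have ev: "e \<in> vecs n" using x y by (simp add: e_def)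
  have e0: "e \<noteq> z0 n"
  proof
    assume "e = z0 n"
    hence "\<forall>i<n. e!i = False" by simp
    hence "x = y" using x y by (intro vecs_eqI[of _ n]) (auto simp: e_def)
    thus False using xy by simp
  qed
  define c where "c = real (card {A \<in> flats n k. z0 n \<in> A \<and> e \<in> A})"
  have cz: "real (card {A \<in> flats n k. z0 n \<in> A}) = F * p" using c1[of "z0 n"] by simp
  have "real ((2^n - 1) * card {A \<in> flats n k. z0 n \<in> A \<and> e \<in> A}) = real (card {A \<in> flats n k. z0 n \<in> A} * (2^(n-k) - 1))"
    using cnt2_formula[OF ev e0] by metis
  moreover have "(1::nat) \<le> 2^n" "(1::nat) \<le> 2^(n-k)" by simp_all
  ultimately have eq: "(2^n - 1) * c = F * p * (2^(n-k) - 1)"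
    by (simp add: c_def cz of_nat_diff)
  have e2: "(2::real)^n = 2^k * 2^(n-k)" using kn by (simp add: power_add[symmetric])
  have pn: "p * 2^n = 2^(n-k)" by (simp add: e2)
  have "F * p * (2^(n-k) - 1) \<le> F * p^2 * (2^n - 1)"
  proof -
    have "(2::real)^(n-k) - 1 \<le> p * (2^n - 1)" using pn p_bounds by (simp add: right_diff_distrib)
    hence "F * p * (2^(n-k) - 1) \<le> F * p * (p * (2^n - 1))"
      using F_pos p_bounds by (intro mult_left_mono) auto
    thus ?thesis by (simp add: power2_eq_square mult_ac)
  qed
  hence "(2^n - 1) * c \<le> (2^n - 1) * (F * p^2)" using eq by (simp add: mult_ac)
  moreover have "(0::real) < 2^n - 1"
  proof -
    have "(2::real)^1 \<le> 2^n" using k1 kn by (intro power_increasing) auto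
    thus ?thesis by simp
  qed
  ultimately have "c \<le> F * p^2" by simp
  thus ?thesis using cnt2_transl[OF x y] by (simp add: c_def e_def)
qed

end



lemma prod_of_bool_all: "(\<Prod>j<(m::nat). (of_bool (P j) :: real)) = of_bool (\<forall>j<m. P j)"
  by (induction m) (auto simp: less_Suc_eq)

lemma Zc_sum: "real (Zc n m V) = (\<Sum>x\<in>vecs n. \<Prod>j<m. of_bool (x \<notin> V j))"
proof -
  have "vecs n - (\<Union>j<m. V j) = {x\<in>vecs n. \<forall>j<m. x \<notin> V j}" by auto
  hence "real (Zc n m V) = (\<Sum>x\<in>vecs n. of_bool (\<forall>j<m. x \<notin> V j))"
    by (simp add: Zc_def Int_def)
  thus ?thesis by (simp add: prod_of_bool_all)
qed

context flatctx
begin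

lemma set_q0[simp]: "set_pmf (q0 n k) = flats n k"
  using flats_nonempty[OF kn] by (simp add: q0_def)

lemma E_q0: "measure_pmf.expectation (q0 n k) f = (\<Sum>A\<in>flats n k. f A) / F"
  using flats_nonempty[OF kn] by (simp add: q0_def integral_pmf_of_set)

lemma E_q0_one:
  assumes x: "x \<in> vecs n"
  shows "measure_pmf.expectation (q0 n k) (\<lambda>A. of_bool (x \<notin> A)) = 1 - p"
proof -
  have "(\<Sum>A\<in>flats n k. (of_bool (x \<notin> A)::real)) = (\<Sum>A\<in>flats n k. 1 - of_bool (x \<in> A))"
    by (rule sum.cong) auto
  also have "\<dots> = F - F * p" using c1[OF x] by (simp add: sum_subtractf Int_def)
  finally have eq: "(\<Sum>A\<in>flats n k. (of_bool (x \<notin> A)::real)) = F - F * p" .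
  have "measure_pmf.expectation (q0 n k) (\<lambda>A. of_bool (x \<notin> A)) = (F - F * p) / F"
    by (simp only: E_q0 eq)
  also have "\<dots> = 1 - p" using F_pos flats_nonempty[OF kn] by (simp add: diff_divide_distrib)
  finally show ?thesis .
qed

lemma E_q0_two:
  assumes x: "x \<in> vecs n" and y: "y \<in> vecs n"
  shows "measure_pmf.expectation (q0 n k) (\<lambda>A. of_bool (x \<notin> A) * of_bool (y \<notin> A))
     \<le> (if x = y then 1 - p else (1 - p)^2)"
proof (cases "x = y")
  case True
  have "(\<lambda>A. (of_bool (x \<notin> A)::real) * of_bool (y \<notin> A)) = (\<lambda>A. of_bool (x \<notin> A))"
    using True by auto
  thus ?thesis using E_q0_one[OF x] True by simp
next
  case False
  have "(\<Sum>A\<in>flats n k. (of_bool (x \<notin> A) * of_bool (y \<notin> A)::real))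
      = (\<Sum>A\<in>flats n k. 1 - of_bool (x \<in> A) - of_bool (y \<in> A) + of_bool (x \<in> A \<and> y \<in> A))"
    by (rule sum.cong) auto
  also have "\<dots> = F - F * p - F * p + real (card {A \<in> flats n k. x \<in> A \<and> y \<in> A})"
    using c1[OF x] c1[OF y] by (simp add: sum.distrib sum_subtractf Int_def)
  also have "\<dots> \<le> F - F * p - F * p + F * p^2" using c2[OF x y False] by simp
  finally have "(\<Sum>A\<in>flats n k. (of_bool (x \<notin> A) * of_bool (y \<notin> A)::real)) / F \<le> (F - F * p - F * p + F * p^2) / F"
    using F_pos by (simp add: divide_right_mono)
  also have "\<dots> = 1 - p - p + p^2" using F_pos flats_nonempty[OF kn] by (simp add: diff_divide_distrib add_divide_distrib)
  also have "\<dots> = (1 - p)^2" by (simp add: power2_eq_square algebra_simps)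
  finally show ?thesis using False by (simp add: E_q0)
qed

abbreviation Pu where "Pu m \<equiv> P_unif n k m"

lemma finite_Pu: "finite (set_pmf (Pu m))"
  unfolding P_unif_def by (subst set_Pi_pmf) (auto intro!: finite_PiE_dflt)

lemma integrable_Pu[simp]: "integrable (measure_pmf (Pu m)) (f :: _ \<Rightarrow> real)"
  by (rule integrable_measure_pmf_finite[OF finite_Pu])

lemma integrable_q0[simp]: "integrable (measure_pmf (q0 n k)) (f :: _ \<Rightarrow> real)"
  by (rule integrable_measure_pmf_finite) simp

abbreviation mu :: "nat \<Rightarrow> real" where "mu m \<equiv> 2^n * (1 - p)^m"

lemma E_prod:
  fixes f :: "bool list set \<Rightarrow> real"
  assumes "\<And>A. f A \<ge> 0"
  shows "measure_pmf.expectation (Pu m) (\<lambda>V. \<Prod>j<m. f (V j)) = (measure_pmf.expectation (q0 n k) f)^m"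
  unfolding P_unif_def
  using expectation_prod_Pi_pmf[of "{..<m}" "\<lambda>_. q0 n k" "\<lambda>_. f" "{}"] assms by simp

lemma E_Z: "measure_pmf.expectation (Pu m) (\<lambda>V. real (Zc n m V)) = mu m"
proof -
  have "measure_pmf.expectation (Pu m) (\<lambda>V. real (Zc n m V))
      = measure_pmf.expectation (Pu m) (\<lambda>V. \<Sum>x\<in>vecs n. \<Prod>j<m. of_bool (x \<notin> V j))"
    by (simp add: Zc_sum)
  also have "\<dots> = (\<Sum>x\<in>vecs n. measure_pmf.expectation (Pu m) (\<lambda>V. \<Prod>j<m. of_bool (x \<notin> V j)))"
    by (simp add: integral_sum)
  also have "\<dots> = (\<Sum>x\<in>vecs n. (1 - p)^m)"
  proof (rule sum.cong)
    fix x assume x: "x \<in> vecs n"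
    show "measure_pmf.expectation (Pu m) (\<lambda>V. \<Prod>j<m. of_bool (x \<notin> V j)) = (1 - p)^m"
      using E_prod[of "\<lambda>A. of_bool (x \<notin> A)" m] E_q0_one[OF x] by simp
  qed simp
  finally show ?thesis by (simp add: card_vecs)
qed

lemma E_Z2: "measure_pmf.expectation (Pu m) (\<lambda>V. (real (Zc n m V))^2) \<le> mu m + (mu m)^2"
proof -
  have "measure_pmf.expectation (Pu m) (\<lambda>V. (real (Zc n m V))^2)
      = measure_pmf.expectation (Pu m) (\<lambda>V. \<Sum>x\<in>vecs n. \<Sum>y\<in>vecs n. \<Prod>j<m. of_bool (x \<notin> V j) * of_bool (y \<notin> V j))"
    by (simp add: Zc_sum power2_eq_square sum_product prod.distrib)
  also have "\<dots> = (\<Sum>x\<in>vecs n. \<Sum>y\<in>vecs n. measure_pmf.expectation (Pu m) (\<lambda>V. \<Prod>j<m. of_bool (x \<notin> V j) * of_bool (y \<notin> V j)))"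
    by (simp add: integral_sum)
  also have "\<dots> = (\<Sum>x\<in>vecs n. \<Sum>y\<in>vecs n. (measure_pmf.expectation (q0 n k) (\<lambda>A. of_bool (x \<notin> A) * of_bool (y \<notin> A)))^m)"
    by (subst E_prod) auto
  also have "\<dots> \<le> (\<Sum>x\<in>vecs n. \<Sum>y\<in>vecs n. of_bool (x = y) * (1-p)^m + ((1-p)^2)^m)"
  proof (intro sum_mono)
    fix x y assume xy: "x \<in> vecs n" "y \<in> vecs n"
    have "(measure_pmf.expectation (q0 n k) (\<lambda>A. of_bool (x \<notin> A) * of_bool (y \<notin> A)))^m
       \<le> (if x = y then 1 - p else (1 - p)^2)^m"
      by (intro power_mono E_q0_two xy) (simp add: integral_nonneg)
    also have "\<dots> \<le> of_bool (x = y) * (1-p)^m + ((1-p)^2)^m" using p_bounds by auto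
    finally show "(measure_pmf.expectation (q0 n k) (\<lambda>A. of_bool (x \<notin> A) * of_bool (y \<notin> A)))^m
       \<le> of_bool (x = y) * (1-p)^m + ((1-p)^2)^m" .
  qed
  also have "\<dots> = (\<Sum>x\<in>vecs n. (1-p)^m + 2^n * ((1-p)^2)^m)"
  proof (rule sum.cong)
    fix x assume x: "x \<in> vecs n"
    have "(\<Sum>y\<in>vecs n. of_bool (x = y) * (1-p)^m + ((1-p)^2)^m) = (\<Sum>y\<in>vecs n. of_bool (x = y) * (1-p)^m) + 2^n * ((1-p)^2)^m"
      by (simp add: sum.distrib card_vecs)
    also have "(\<Sum>y\<in>vecs n. of_bool (x = y) * (1-p)^m) = (\<Sum>y\<in>{x}. (1-p)^m)"
      by (rule sum.mono_neutral_cong_right) (use x in auto)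
    finally show "(\<Sum>y\<in>vecs n. of_bool (x = y) * (1-p)^m + ((1-p)^2)^m) = (1-p)^m + 2^n * ((1-p)^2)^m" by simp
  qed simp
  also have "\<dots> = 2^n * ((1-p)^m + 2^n * ((1-p)^2)^m)"
    by (simp add: card_vecs)
  also have "\<dots> = mu m + (mu m)^2"
  proof -
    have "((1-p)^m)^2 = ((1-p)^2)^m" by (simp add: power_mult[symmetric] mult.commute)
    thus ?thesis by (simp add: power_mult_distrib algebra_simps power2_eq_square)
  qed
  finally show ?thesis .
qed

end



context flatctx
begin

lemma Fx: "x \<in> vecs n \<Longrightarrow> real (card {A \<in> flats n k. x \<notin> A}) = F * (1 - p)"
proof -
  assume x: "x \<in> vecs n"
  have "real (card {A \<in> flats n k. x \<notin> A}) = (\<Sum>A\<in>flats n k. (of_bool (x \<notin> A)::real))"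
    by (rule card_filter_real) simp
  also have "\<dots> = (\<Sum>A\<in>flats n k. 1 - of_bool (x \<in> A))"
    by (rule sum.cong) auto
  also have "\<dots> = F - F * p" using c1[OF x] by (simp add: sum_subtractf Int_def)
  finally show ?thesis by (simp add: algebra_simps)
qed

lemma p_less1: "1 - p > 0" using p_bounds by simp

lemma pmf_q0: "pmf (q0 n k) A = indicator (flats n k) A / F"
  using flats_nonempty[OF kn] by (simp add: q0_def)

lemma pmf_qx:
  assumes x: "x \<in> vecs n"
  shows "pmf (qx n k x) A = pmf (q0 n k) A * of_bool (x \<notin> A) / (1 - p)"
proof -
  have ne: "{A \<in> flats n k. x \<notin> A} \<noteq> {}"
  proof
    assume "{A \<in> flats n k. x \<notin> A} = {}"
    hence "real (card {A \<in> flats n k. x \<notin> A}) = 0" by simp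
    thus False using Fx[OF x] F_pos p_less1 by simp
  qed
  have "pmf (qx n k x) A = indicator {A \<in> flats n k. x \<notin> A} A / (F * (1 - p))"
    using ne by (simp add: qx_def Fx[OF x])
  thus ?thesis by (simp add: pmf_q0 indicator_def)
qed

lemma pmf_Px:
  assumes x: "x \<in> vecs n"
  shows "pmf (P_x n k m x) V = pmf (Pu m) V * of_bool (\<forall>j<m. x \<notin> V j) / (1 - p)^m"
proof -
  have "(\<Prod>j<m. pmf (qx n k x) (V j)) = (\<Prod>j<m. pmf (q0 n k) (V j) * of_bool (x \<notin> V j) / (1 - p))"
    by (simp add: pmf_qx[OF x])
  also have "\<dots> = (\<Prod>j<m. pmf (q0 n k) (V j)) * (\<Prod>j<m. (of_bool (x \<notin> V j)::real)) / (1 - p)^m"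
    by (simp add: prod_dividef prod.distrib)
  finally have pe: "(\<Prod>j<m. pmf (qx n k x) (V j)) = (\<Prod>j<m. pmf (q0 n k) (V j)) * (\<Prod>j<m. (of_bool (x \<notin> V j)::real)) / (1 - p)^m" .
  show ?thesis
  proof (cases "\<forall>i. i \<notin> {..<m} \<longrightarrow> V i = {}")
    case True
    thus ?thesis using pe unfolding P_x_def P_unif_def by (simp only: pmf_Pi finite_lessThan if_P[OF True] prod_of_bool_all)
  next
    case False
    thus ?thesis unfolding P_x_def P_unif_def by (simp only: pmf_Pi finite_lessThan if_False)
  qed
qed

lemma mu_pos: "mu m > 0" using p_less1 by simp

lemma pmf_Pp: "pmf (P_planted n k m) V = pmf (Pu m) V * real (Zc n m V) / mu m"
proof -
  have "pmf (P_planted n k m) V = (\<Sum>x\<in>vecs n. pmf (P_x n k m x) V) / 2^n"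
  proof -
    have ne: "vecs n \<noteq> {}" using vecs_iff[of "replicate n False" n] by (metis empty_iff length_replicate)
    show ?thesis unfolding P_planted_def by (subst pmf_bind_pmf_of_set[OF ne finite_vecs]) (simp add: card_vecs)
  qed
  also have "\<dots> = (\<Sum>x\<in>vecs n. pmf (Pu m) V * of_bool (\<forall>j<m. x \<notin> V j) / (1 - p)^m) / 2^n"
    by (simp add: pmf_Px)
  also have "\<dots> = pmf (Pu m) V * (\<Sum>x\<in>vecs n. (of_bool (\<forall>j<m. x \<notin> V j)::real)) / mu m"
    by (simp add: sum_divide_distrib[symmetric] sum_distrib_left[symmetric] del: sum_of_bool_eq)
  also have "(\<Sum>x\<in>vecs n. (of_bool (\<forall>j<m. x \<notin> V j)::real)) = real (Zc n m V)"
    by (simp add: Zc_sum prod_of_bool_all del: sum_of_bool_eq)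
  finally show ?thesis .
qed

lemma change_measure:
  "measure_pmf.expectation (P_planted n k m) h =
   measure_pmf.expectation (Pu m) (\<lambda>V. h V * real (Zc n m V) / mu m)"
proof -
  have sub: "a \<in> set_pmf (Pu m)" if "a \<in> set_pmf (P_planted n k m)" for a
    using that by (auto simp: set_pmf_iff pmf_Pp)
  have "measure_pmf.expectation (P_planted n k m) h = (\<Sum>a\<in>set_pmf (Pu m). h a * pmf (P_planted n k m) a)"
    by (rule integral_measure_pmf_real) (auto simp: finite_Pu sub)
  also have "\<dots> = (\<Sum>a\<in>set_pmf (Pu m). (h a * real (Zc n m a) / mu m) * pmf (Pu m) a)"
    by (rule sum.cong) (simp_all add: pmf_Pp)
  also have "\<dots> = measure_pmf.expectation (Pu m) (\<lambda>V. h V * real (Zc n m V) / mu m)"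
    by (rule integral_measure_pmf_real[symmetric]) (auto simp: finite_Pu)
  finally show ?thesis .
qed

end



lemma pointwise_ineq:
  fixes g x e :: real
  assumes "0 \<le> g" "g \<le> 1" "e > 0"
  shows "g + (1 - g) * x \<ge> x - e - (x - 1)^2 / (4 * e)"
proof (cases "x \<le> 1")
  case True
  have "(x - 1)^2 / (4 * e) \<ge> 0" using assms by simp
  moreover have "g * (1 - x) \<ge> 0" using True assms by simp
  moreover have "g + (1-g)*x - (x - e - (x-1)^2/(4*e)) = g*(1-x) + e + (x-1)^2/(4*e)" by (simp add: algebra_simps)
  ultimately show ?thesis using assms by linarith
next
  case False
  have "g * (1 - x) \<ge> 1 - x" using False assms
    by (metis diff_ge_0_iff_ge less_eq_real_def linorder_not_le mult_le_cancel_right1 mult.commute)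
  moreover have "x - 1 \<le> e + (x - 1)^2 / (4 * e)"
  proof -
    have "4 * e * (x - 1) \<le> 4 * e * e + (x - 1)^2"
      using sum_power2_ge_zero[of "x - 1 - 2*e" 0] by (simp add: power2_eq_square algebra_simps)
    hence "(4 * e * (x - 1)) / (4 * e) \<le> (4 * e * e + (x - 1)^2) / (4 * e)"
      using assms by (intro divide_right_mono) auto
    thus ?thesis using assms by (simp add: add_divide_distrib)
  qed
  moreover have "g + (1-g)*x - (x - e - (x-1)^2/(4*e)) = g*(1-x) + e + (x-1)^2/(4*e)" by (simp add: algebra_simps)
  ultimately show ?thesis by linarith
qed

lemma avg_max: "(c::real) \<le> a + b \<Longrightarrow> c/2 \<le> max a b"
  by (simp add: max_def)

context flatctx
begin

lemma part1_bound:
  "measure_pmf.prob (Pu m) {V. Zc n m V > 0} \<le> mu m"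
  "measure_pmf.prob (P_planted n k m) {V. \<not> Zc n m V > 0} = 0"
proof -
  have "measure_pmf.prob (Pu m) {V. Zc n m V > 0} = measure_pmf.expectation (Pu m) (indicator {V. Zc n m V > 0})"
    by simp
  also have "\<dots> \<le> measure_pmf.expectation (Pu m) (\<lambda>V. real (Zc n m V))"
    by (rule integral_mono) (auto simp: indicator_def)
  finally show "measure_pmf.prob (Pu m) {V. Zc n m V > 0} \<le> mu m" by (simp add: E_Z)
  have "measure_pmf.prob (P_planted n k m) {V. \<not> Zc n m V > 0} = measure_pmf.expectation (P_planted n k m) (indicator {V. \<not> Zc n m V > 0})"
    by simp
  also have "\<dots> = measure_pmf.expectation (Pu m) (\<lambda>V. indicator {V. \<not> Zc n m V > 0} V * real (Zc n m V) / mu m)"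
    by (rule change_measure)
  also have "(\<lambda>V. indicator {V. \<not> Zc n m V > 0} V * real (Zc n m V) / mu m) = (\<lambda>V. 0)"
    by (auto simp: indicator_def)
  finally show "measure_pmf.prob (P_planted n k m) {V. \<not> Zc n m V > 0} = 0" by simp
qed

lemma part2_lower:
  assumes e: "e > 0"
  shows "test_err n k m \<psi> \<ge> (1 - e - 1 / (4 * e * mu m)) / 2"
proof -
  define g where "g V = pmf (\<psi> V) True" for V
  define X where "X V = real (Zc n m V) / mu m" for V
  have g01: "0 \<le> g V" "g V \<le> 1" for V by (auto simp: g_def pmf_le_1)
  have a: "measure_pmf.prob (bind_pmf (Pu m) \<psi>) {True} = measure_pmf.expectation (Pu m) g"
    by (simp add: measure_pmf_single pmf_bind g_def[abs_def])
  have "measure_pmf.prob (bind_pmf (P_planted n k m) \<psi>) {False} = measure_pmf.expectation (P_planted n k m) (\<lambda>V. 1 - g V)"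
    unfolding measure_pmf_single pmf_bind g_def by (simp only: pmf_False_conv_True)
  also have "\<dots> = measure_pmf.expectation (Pu m) (\<lambda>V. (1 - g V) * X V)"
    by (simp add: change_measure X_def)
  finally have b: "measure_pmf.prob (bind_pmf (P_planted n k m) \<psi>) {False} = measure_pmf.expectation (Pu m) (\<lambda>V. (1 - g V) * X V)" .
  have EX: "measure_pmf.expectation (Pu m) X = 1"
    using E_Z[of m] mu_pos[of m] p_bounds unfolding X_def[abs_def] by simp
  have EX2: "measure_pmf.expectation (Pu m) (\<lambda>V. (X V)^2) \<le> 1 / mu m + 1"
  proof -
    have "measure_pmf.expectation (Pu m) (\<lambda>V. (X V)^2) = measure_pmf.expectation (Pu m) (\<lambda>V. (real (Zc n m V))^2) / (mu m)^2"
      by (simp add: X_def power_divide)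
    also have "\<dots> \<le> (mu m + (mu m)^2) / (mu m)^2"
      by (rule divide_right_mono[OF E_Z2]) simp
    also have "\<dots> = 1 / mu m + 1"
    proof -
      have gen: "\<And>u::real. u > 0 \<Longrightarrow> (u + u^2)/u^2 = 1/u + 1" by (simp add: field_simps power2_eq_square)
      show ?thesis by (rule gen[OF mu_pos])
    qed
    finally show ?thesis .
  qed
  have "measure_pmf.expectation (Pu m) g + measure_pmf.expectation (Pu m) (\<lambda>V. (1 - g V) * X V)
      = measure_pmf.expectation (Pu m) (\<lambda>V. g V + (1 - g V) * X V)"
    by simp
  also have "\<dots> \<ge> measure_pmf.expectation (Pu m) (\<lambda>V. (1 + 1/(2*e)) * X V - (e + 1/(4*e)) - (X V)^2 / (4 * e))"
  proof (rule integral_mono)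
    fix V
    have "g V + (1 - g V) * X V \<ge> X V - e - (X V - 1)^2 / (4 * e)"
      by (rule pointwise_ineq[OF g01 e])
    also have "X V - e - (X V - 1)^2 / (4 * e) = (1 + 1/(2*e)) * X V - (e + 1/(4*e)) - (X V)^2 / (4 * e)"
      using e by (simp add: field_simps power2_eq_square)
    finally show "(1 + 1/(2*e)) * X V - (e + 1/(4*e)) - (X V)^2 / (4 * e) \<le> g V + (1 - g V) * X V" .
  qed simp_all
  also have "measure_pmf.expectation (Pu m) (\<lambda>V. (1 + 1/(2*e)) * X V - (e + 1/(4*e)) - (X V)^2 / (4 * e))
      = (1 + 1/(2*e)) * measure_pmf.expectation (Pu m) X - (e + 1/(4*e)) - measure_pmf.expectation (Pu m) (\<lambda>V. (X V)^2) / (4 * e)"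
    by (simp add: integral_diff)
  finally have "(1 + 1/(2*e)) - (e + 1/(4*e)) - measure_pmf.expectation (Pu m) (\<lambda>V. (X V)^2) / (4 * e)
      \<le> measure_pmf.expectation (Pu m) g + measure_pmf.expectation (Pu m) (\<lambda>V. (1 - g V) * X V)"
    by (simp add: EX)
  moreover have "measure_pmf.expectation (Pu m) (\<lambda>V. (X V)^2) / (4 * e) \<le> (1 / mu m + 1) / (4 * e)"
    using EX2 e by (intro divide_right_mono) auto
  moreover have "(1 + 1/(2*e)) - (e + 1/(4*e)) - (1 / mu m + 1) / (4 * e) = 1 - e - 1 / (4 * e * mu m)"
  proof -
    have gen: "\<And>u::real. u > 0 \<Longrightarrow> (1 + 1/(2*e)) - (e + 1/(4*e)) - (1 / u + 1) / (4 * e) = 1 - e - 1 / (4 * e * u)"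
      using e by (simp add: field_simps)
    show ?thesis by (rule gen[OF mu_pos])
  qed
  ultimately have "1 - e - 1 / (4 * e * mu m) \<le> measure_pmf.prob (bind_pmf (Pu m) \<psi>) {True} + measure_pmf.prob (bind_pmf (P_planted n k m) \<psi>) {False}"
    unfolding a b by linarith
  thus ?thesis unfolding test_err_def by (rule avg_max)
qed

end



lemma mm_bounds:
  assumes "\<Delta> > 0"
  shows "real (mm \<Delta> n) \<le> \<Delta> * real n" "real (mm \<Delta> n) \<ge> \<Delta> * real n - 1"
proof -
  have nn: "\<lfloor>\<Delta> * real n\<rfloor> \<ge> 0" using assms by simp
  have "real (mm \<Delta> n) = of_int \<lfloor>\<Delta> * real n\<rfloor>" using nn by (simp add: mm_def)
  thus "real (mm \<Delta> n) \<le> \<Delta> * real n" "real (mm \<Delta> n) \<ge> \<Delta> * real n - 1"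
    by (simp_all add: of_int_floor_le)
qed

lemma mu_exp:
  assumes "(q::real) > 0"
  shows "2^n * q^m = exp (real n * ln 2 + real m * ln q)"
  using assms by (simp add: exp_add exp_of_nat_mult)

lemma fs: "1 \<le> k \<Longrightarrow> k \<le> n \<Longrightarrow> flatctx n k"
  by (unfold_locales)

theorem mainTheorem5:
  fixes k :: nat and \<Delta> :: real
  assumes "k \<ge> 1" and "\<Delta> > 0"
  shows "(\<Delta> > Delta_k k \<longrightarrow>
           (\<lambda>n. max (measure_pmf.prob (P_unif n k (mm \<Delta> n)) {V. Zc n (mm \<Delta> n) V > 0})
                      (measure_pmf.prob (P_planted n k (mm \<Delta> n)) {V. \<not> Zc n (mm \<Delta> n) V > 0}))
           \<longlonglongrightarrow> 0)
       \<and> (\<Delta> < Delta_k k \<longrightarrow>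
           (\<lambda>n. INF \<psi>\<in>(UNIV :: ((nat \<Rightarrow> bool list set) \<Rightarrow> bool pmf) set).
                   test_err n k (mm \<Delta> n) \<psi>)
           \<longlonglongrightarrow> 1/2)"
proof -
  define q :: real where "q = 1 - 1/2^k"
  have kk: "(2::real)^1 \<le> 2^k" using assms(1) by (intro power_increasing) auto
  have q0: "q > 0" "q < 1" using kk by (auto simp: q_def)
  define L where "L = ln q"
  have L0: "L < 0" using q0 by (simp add: L_def)
  have pw: "(2::real) powr (- real k) = 1/2^k"
    by (simp add: powr_minus powr_realpow inverse_eq_divide)
  have l2: "ln (1/2::real) = - ln 2" by (simp add: ln_div)
  have Dk: "Delta_k k = - ln 2 / L"
    unfolding Delta_k_def L_def q_def pw l2 ..
  define c where "c = ln 2 + \<Delta> * L"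
  have mu_eq: "2^n * (1 - 1/2^k)^(mm \<Delta> n) = exp (real n * ln 2 + real (mm \<Delta> n) * L)" for n
    using mu_exp[OF q0(1)] by (simp add: q_def L_def)
  show ?thesis
  proof (intro conjI impI)
    assume D: "\<Delta> > Delta_k k"
    have "\<Delta> * L < - ln 2"
    proof -
      have h: "- ln 2 / L < \<Delta>" using D Dk by simp
      show ?thesis using neg_divide_less_eq[OF L0, of "- ln 2" \<Delta>] h by blast
    qed
    hence c0: "c < 0" by (simp add: c_def)
    define C where "C = exp (- L)"
    have bound: "2^n * (1 - 1/2^k)^(mm \<Delta> n) \<le> C * exp c ^ n" for n
    proof -
      have "real (mm \<Delta> n) * L \<le> (\<Delta> * real n - 1) * L"
        using mm_bounds(2)[OF assms(2), of n] L0 by (intro mult_right_mono_neg) auto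
      hence "real n * ln 2 + real (mm \<Delta> n) * L \<le> - L + real n * c"
        by (simp add: c_def algebra_simps)
      hence "exp (real n * ln 2 + real (mm \<Delta> n) * L) \<le> exp (- L + real n * c)" by simp
      also have "\<dots> = C * exp c ^ n" unfolding C_def exp_add exp_of_nat_mult ..
      finally show ?thesis using mu_eq by simp
    qed
    have lim: "(\<lambda>n. C * exp c ^ n) \<longlonglongrightarrow> 0"
      using c0 by (intro tendsto_mult_right_zero LIMSEQ_power_zero) simp
    show "(\<lambda>n. max (measure_pmf.prob (P_unif n k (mm \<Delta> n)) {V. Zc n (mm \<Delta> n) V > 0})
                      (measure_pmf.prob (P_planted n k (mm \<Delta> n)) {V. \<not> Zc n (mm \<Delta> n) V > 0}))
           \<longlonglongrightarrow> 0"
    proof (rule tendsto_sandwich[OF _ _ tendsto_const lim])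
      show "\<forall>\<^sub>F n in sequentially. 0 \<le> max (measure_pmf.prob (P_unif n k (mm \<Delta> n)) {V. Zc n (mm \<Delta> n) V > 0})
                      (measure_pmf.prob (P_planted n k (mm \<Delta> n)) {V. \<not> Zc n (mm \<Delta> n) V > 0})"
        by (simp add: max.coboundedI1)
      show "\<forall>\<^sub>F n in sequentially. max (measure_pmf.prob (P_unif n k (mm \<Delta> n)) {V. Zc n (mm \<Delta> n) V > 0})
                      (measure_pmf.prob (P_planted n k (mm \<Delta> n)) {V. \<not> Zc n (mm \<Delta> n) V > 0}) \<le> C * exp c ^ n"
        using eventually_ge_at_top[of k]
      proof eventually_elim
        case (elim n)
        note F = fs[OF assms(1) elim]
        have "max (measure_pmf.prob (P_unif n k (mm \<Delta> n)) {V. Zc n (mm \<Delta> n) V > 0})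
                      (measure_pmf.prob (P_planted n k (mm \<Delta> n)) {V. \<not> Zc n (mm \<Delta> n) V > 0})
             = measure_pmf.prob (P_unif n k (mm \<Delta> n)) {V. Zc n (mm \<Delta> n) V > 0}"
          using flatctx.part1_bound(2)[OF F] by simp
        also have "\<dots> \<le> 2^n * (1 - 1/2^k)^(mm \<Delta> n)" by (rule flatctx.part1_bound(1)[OF F])
        also have "\<dots> \<le> C * exp c ^ n" by (rule bound)
        finally show ?case .
      qed
    qed
  next
    assume D: "\<Delta> < Delta_k k"
    have "\<Delta> * L > - ln 2"
    proof -
      have h: "\<Delta> < - ln 2 / L" using D Dk by simp
      show ?thesis using neg_less_divide_eq[OF L0, of \<Delta> "- ln 2"] h by blast
    qed
    hence c0: "c > 0" by (simp add: c_def)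
    define r where "r = 1 / sqrt (exp c)"
    have r: "0 \<le> r" "r < 1" using c0 by (auto simp: r_def)
    have bound: "1 / sqrt (2^n * (1 - 1/2^k)^(mm \<Delta> n)) \<le> r ^ n" for n
    proof -
      have "real (mm \<Delta> n) * L \<ge> (\<Delta> * real n) * L"
        using mm_bounds(1)[OF assms(2), of n] L0 by (intro mult_right_mono_neg) auto
      hence "real n * ln 2 + real (mm \<Delta> n) * L \<ge> real n * c"
        by (simp add: c_def algebra_simps)
      hence "exp (real n * ln 2 + real (mm \<Delta> n) * L) \<ge> exp (real n * c)" by simp
      hence "2^n * (1 - 1/2^k)^(mm \<Delta> n) \<ge> exp c ^ n" using mu_eq by (simp add: exp_of_nat_mult)
      hence "sqrt (2^n * (1 - 1/2^k)^(mm \<Delta> n)) \<ge> sqrt (exp c) ^ n" by (simp add: real_sqrt_power[symmetric])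
      moreover have pos: "0 < sqrt (exp c) ^ n" by simp
      ultimately have "1 / sqrt (2^n * (1 - 1/2^k)^(mm \<Delta> n)) \<le> 1 / sqrt (exp c) ^ n"
        by (intro frac_le) auto
      thus ?thesis by (simp add: r_def power_one_over)
    qed
    have lim: "(\<lambda>n. (1 - r^n) / 2) \<longlonglongrightarrow> 1/2"
    proof -
      have h: "(\<lambda>n. r^n) \<longlonglongrightarrow> 0" by (rule LIMSEQ_power_zero) (use r in simp)
      have "(\<lambda>n. (1 - r^n) / 2) \<longlonglongrightarrow> (1 - 0) / 2" by (intro tendsto_intros h) simp
      thus ?thesis by simp
    qed
    show "(\<lambda>n. INF \<psi>\<in>(UNIV :: ((nat \<Rightarrow> bool list set) \<Rightarrow> bool pmf) set).
                   test_err n k (mm \<Delta> n) \<psi>) \<longlonglongrightarrow> 1/2"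
    proof (rule tendsto_sandwich[OF _ _ lim tendsto_const])
      have nonneg: "0 \<le> test_err n k m \<psi>" for n m \<psi>
        by (simp add: test_err_def max.coboundedI1)
      have bdd: "bdd_below (range (test_err n k m))" for n m
        by (rule bdd_belowI[of _ 0]) (auto simp: nonneg)
      show "\<forall>\<^sub>F n in sequentially. (INF \<psi>\<in>(UNIV :: ((nat \<Rightarrow> bool list set) \<Rightarrow> bool pmf) set).
                   test_err n k (mm \<Delta> n) \<psi>) \<le> 1/2"
      proof (intro always_eventually allI)
        fix n
        have "(INF \<psi>\<in>(UNIV :: ((nat \<Rightarrow> bool list set) \<Rightarrow> bool pmf) set). test_err n k (mm \<Delta> n) \<psi>)
            \<le> test_err n k (mm \<Delta> n) (\<lambda>_. bernoulli_pmf (1/2))"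
          by (rule cINF_lower[OF bdd]) simp
        also have "\<dots> = 1/2" unfolding test_err_def bind_pmf_const measure_pmf_single pmf_bernoulli_half by simp
        finally show "(INF \<psi>\<in>(UNIV :: ((nat \<Rightarrow> bool list set) \<Rightarrow> bool pmf) set). test_err n k (mm \<Delta> n) \<psi>) \<le> 1/2" .
      qed
      show "\<forall>\<^sub>F n in sequentially. (1 - r^n) / 2 \<le> (INF \<psi>\<in>(UNIV :: ((nat \<Rightarrow> bool list set) \<Rightarrow> bool pmf) set).
                   test_err n k (mm \<Delta> n) \<psi>)"
        using eventually_ge_at_top[of k]
      proof eventually_elim
        case (elim n)
        note F = fs[OF assms(1) elim]
        define u :: real where "u = 2^n * (1 - 1/2^k)^(mm \<Delta> n)"
        have u0: "u > 0" using flatctx.mu_pos[OF F] by (simp add: u_def)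
        define e where "e = 1 / (2 * sqrt u)"
        have e0: "e > 0" using u0 by (simp add: e_def)
        have "1 - e - 1 / (4 * e * u) = 1 - 1 / sqrt u"
        proof -
          have ss: "sqrt u * sqrt u = u" using u0 by simp
          have sp: "sqrt u > 0" using u0 by simp
          have "4 * e * u = 4 * (1 / (2 * sqrt u)) * (sqrt u * sqrt u)" by (simp only: ss e_def)
          also have "\<dots> = 2 * sqrt u" using sp by (simp add: field_simps)
          finally have A: "4 * e * u = 2 * sqrt u" .
          have B: "e + 1 / (2 * sqrt u) = 1 / sqrt u" using sp by (simp add: e_def field_simps)
          have "1 / (4 * e * u) = 1 / (2 * sqrt u)" by (simp only: A)
          thus ?thesis using B by linarith
        qed
        moreover have "1 / sqrt u \<le> r^n" using bound[of n] by (simp add: u_def)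
        ultimately have low: "(1 - r^n)/2 \<le> (1 - e - 1 / (4 * e * u)) / 2" by simp
        show ?case
        proof (rule cINF_greatest)
          fix \<psi> :: "(nat \<Rightarrow> bool list set) \<Rightarrow> bool pmf"
          have "(1 - e - 1 / (4 * e * u)) / 2 \<le> test_err n k (mm \<Delta> n) \<psi>"
            using flatctx.part2_lower[OF F e0, of "mm \<Delta> n" \<psi>] by (simp add: u_def)
          thus "(1 - r^n) / 2 \<le> test_err n k (mm \<Delta> n) \<psi>" using low by linarith
        qed simp
      qed
    qed
  qed
qed


end
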